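(* Let $n\ge d\ge2$ and let $\mathcal{C}$ be a $d$-uniform clutter on $[n]$ which is both chordal and co-chordal. Then for all $i\ge1$, \[ \lambda_i(\mathcal{C})\le\binom{n-1-i}{d-2}. \]
   Context: $\mathcal{C}_{n,d}$ is the set of all $d$-subsets of $[n]$; a $d$-uniform clutter on $[n]$ is a subset of $\mathcal{C}_{n,d}$. Submaximal circuit: a $(d-1)$-set contained in some circuit. Clique: a set all of whose $d$-subsets are circuits. $\mathrm{N}_{\mathcal{C}}(e)=\{c: e\cup\{c\}\in\mathcal{C}\}$, $\mathrm{N}_{\mathcal{C}}[e]=e\cup\mathrm{N}_{\mathcal{C}}(e)$; $e$ is simplicial if it is a submaximal circuit and $\mathrm{N}_{\mathcal{C}}[e]$ is a clique. $\mathcal{C}\setminus e=\{F\in\mathcal{C}:e\not\subset F\}$; $\mathcal{C}_{e_1\cdots e_i}$ is successive deletion. A simplicial sequence in $\mathcal{C}$ is $e_1,\ldots,e_t$ with $e_1$ simplicial in $\mathcal{C}$ and $e_i$ simplicial in $\mathcal{C}_{e_1\cdots e_{i-1}}$ for $i>1$; a simplicial order is a simplicial sequence $e_1,\ldots,e_r$ with $\mathcal{C}_{e_1\cdots e_r}=\emptyset$, and $\mathcal{C}$ is chordal if one exists. $\mathcal{C}$ is co-chordal if there is a simplicial sequence $e_1,\ldots,e_r$ in $\mathcal{C}_{n,d}$ with $\mathcal{C}=(\mathcal{C}_{n,d})_{e_1\cdots e_r}$. For chordal $\mathcal{C}$, its multiset is $\{N_1,\ldots,N_r\}$ with $N_i=|\mathrm{N}_{\mathcal{C}_{e_1\cdots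 e_{i-1}}}(e_i)|$ for a simplicial order (independent of the order), and $\lambda_i(\mathcal{C})=|\{j:N_j=i\}|$. Binomial coefficients $\binom{a}{b}$ with $a<b$ or $a<0$ are $0$. *)

theory Defs
  imports Main
begin

definition Cnd :: "nat \<Rightarrow> nat \<Rightarrow> nat set set" where
  "Cnd n d = {F. F \<subseteq> {1..n} \<and> card F = d}"

definition submax_circuit :: "nat \<Rightarrow> nat set set \<Rightarrow> nat set \<Rightarrow> bool" where
  "submax_circuit d C e \<longleftrightarrow> card e = d - 1 \<and> (\<exists>F\<in>C. e \<subseteq> F)"

definition is_clique :: "nat \<Rightarrow> nat set set \<Rightarrow> nat set \<Rightarrow> bool" where
  "is_clique d C K \<longleftrightarrow> (\<forall>F. F \<subseteq> K \<and> card F = d \<longrightarrow> F \<in> C)"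

definition nbhd :: "nat set set \<Rightarrow> nat set \<Rightarrow> nat set" where
  "nbhd C e = {c. e \<union> {c} \<in> C}"

definition cnbhd :: "nat set set \<Rightarrow> nat set \<Rightarrow> nat set" where
  "cnbhd C e = e \<union> nbhd C e"

definition simplicial :: "nat \<Rightarrow> nat set set \<Rightarrow> nat set \<Rightarrow> bool" where
  "simplicial d C e \<longleftrightarrow> submax_circuit d C e \<and> is_clique d C (cnbhd C e)"

definition del :: "nat set set \<Rightarrow> nat set \<Rightarrow> nat set set" where
  "del C e = {F\<in>C. \<not> e \<subseteq> F}"

definition del_seq :: "nat set set \<Rightarrow> nat set list \<Rightarrow> nat set set" where
  "del_seq C es = fold (\<lambda>e D. del D e) es C"

fun simp_seq :: "nat \<Rightarrow> nat set set \<Rightarrow> nat set list \<Rightarrow> bool" where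
  "simp_seq d C [] = True"
| "simp_seq d C (e # es) = (simplicial d C e \<and> simp_seq d (del C e) es)"

definition simp_order :: "nat \<Rightarrow> nat set set \<Rightarrow> nat set list \<Rightarrow> bool" where
  "simp_order d C es \<longleftrightarrow> simp_seq d C es \<and> del_seq C es = {}"

definition chordal :: "nat \<Rightarrow> nat set set \<Rightarrow> bool" where
  "chordal d C \<longleftrightarrow> (\<exists>es. simp_order d C es)"

definition cochordal :: "nat \<Rightarrow> nat \<Rightarrow> nat set set \<Rightarrow> bool" where
  "cochordal n d C \<longleftrightarrow> (\<exists>es. simp_seq d (Cnd n d) es \<and> C = del_seq (Cnd n d) es)"

definition Nseq :: "nat set set \<Rightarrow> nat set list \<Rightarrow> nat \<Rightarrow> nat" where
  "Nseq C es j = card (nbhd (del_seq C (take j es)) (es ! j))"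

definition lambda_cl :: "nat set set \<Rightarrow> nat set list \<Rightarrow> nat \<Rightarrow> nat" where
  "lambda_cl C es i = card {j. j < length es \<and> Nseq C es j = i}"

definition binom0 :: "int \<Rightarrow> nat \<Rightarrow> nat" where
  "binom0 a b = (if a < 0 then 0 else nat a choose b)"

end

theory Submission
  imports Defs
begin

lemma upper_vandermonde:
  "(\<Sum>i<n. (i choose a) * ((n - 1 - i) choose b)) = n choose (a + b + 1)"
proof (induction n arbitrary: b)
  case 0 then show ?case by simp
next
  case (Suc n)
  show ?case
  proof (cases b)
    case 0
    have "(\<Sum>i<Suc n. (i choose a) * ((Suc n - 1 - i) choose b)) = (\<Sum>i\<le>n. i choose a)"
      using 0 by (simp add: lessThan_Suc_atMost)
    also have "\<dots> = Suc n choose Suc a" by (rule sum_choose_upper)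
    finally show ?thesis using 0 by simp
  next
    case (Suc b')
    have "(\<Sum>i<Suc n. (i choose a) * ((Suc n - 1 - i) choose b))
        = (\<Sum>i<n. (i choose a) * ((n - i) choose b)) + (n choose a) * (0 choose b)"
      by simp
    also have "\<dots> = (\<Sum>i<n. (i choose a) * ((n - i) choose b))" using Suc by simp
    also have "\<dots> = (\<Sum>i<n. (i choose a) * ((n - 1 - i) choose b) + (i choose a) * ((n - 1 - i) choose b'))"
    proof (rule sum.cong)
      fix i assume "i \<in> {..<n}"
      then have "n - i = Suc (n - 1 - i)" by auto
      then show "(i choose a) * ((n - i) choose b) = (i choose a) * ((n - 1 - i) choose b) + (i choose a) * ((n - 1 - i) choose b')"
        using Suc by (simp add: algebra_simps)
    qed simp
    also have "\<dots> = (n choose (a + b + 1)) + (n choose (a + b' + 1))"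
      using Suc.IH[of b] Suc.IH[of b'] by (simp add: sum.distrib)
    also have "\<dots> = Suc n choose (a + b + 1)" using Suc by simp
    finally show ?thesis by simp
  qed
qed

lemma moments_unique:
  fixes mu nu :: "nat \<Rightarrow> nat"
  assumes "\<And>i. n < i \<Longrightarrow> mu i = 0" "\<And>i. n < i \<Longrightarrow> nu i = 0"
    and "\<And>k. 1 \<le> k \<Longrightarrow> (\<Sum>i\<le>n. mu i * (i choose k)) = (\<Sum>i\<le>n. nu i * (i choose k))"
  shows "1 \<le> k \<Longrightarrow> mu k = nu k"
proof (induction "n - k" arbitrary: k rule: less_induct)
  case less
  show ?case
  proof (cases "k \<le> n")
    case False then show ?thesis using assms by simp
  next
    case True
    have key: "(\<Sum>i\<le>n. f i * (i choose k)) = f k + (\<Sum>i=Suc k..n. f i * (i choose k))"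
      for f :: "nat \<Rightarrow> nat"
    proof -
      have "{..n} = {..<k} \<union> {k..n}" using True by auto
      then have "(\<Sum>i\<le>n. f i * (i choose k)) = (\<Sum>i<k. f i * (i choose k)) + (\<Sum>i=k..n. f i * (i choose k))"
        by (simp add: sum.union_disjoint ivl_disj_int)
      also have "(\<Sum>i<k. f i * (i choose k)) = 0" by simp
      also have "(\<Sum>i=k..n. f i * (i choose k)) = f k * (k choose k) + (\<Sum>i=Suc k..n. f i * (i choose k))"
        using True by (rule sum.atLeast_Suc_atMost)
      finally show ?thesis by simp
    qed
    have "(\<Sum>i=Suc k..n. mu i * (i choose k)) = (\<Sum>i=Suc k..n. nu i * (i choose k))"
      by (rule sum.cong) (use less in auto)
    then show ?thesis using assms(3)[OF less.prems] key[of mu] key[of nu] by simp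
  qed
qed


definition cl :: "nat \<Rightarrow> nat \<Rightarrow> nat set set \<Rightarrow> nat \<Rightarrow> nat set set" where
  "cl n d D m = {S. S \<subseteq> {1..n} \<and> card S = m \<and> is_clique d D S}"

lemma nbhd_sub: "D \<subseteq> Cnd n d \<Longrightarrow> nbhd D g \<subseteq> {1..n}"
  unfolding nbhd_def Cnd_def by auto

lemma del_seq_Cons: "del_seq D (g # gs) = del_seq (del D g) gs"
  by (simp add: del_seq_def)

lemma del_seq_append: "del_seq D (xs @ ys) = del_seq (del_seq D xs) ys"
  by (simp add: del_seq_def)

lemma del_seq_sub: "del_seq D gs \<subseteq> D"
  by (induction gs arbitrary: D) (auto simp: del_seq_Cons del_def del_seq_def[of _ "[]"])

lemma simp_seq_append: "simp_seq d D (xs @ ys) = (simp_seq d D xs \<and> simp_seq d (del_seq D xs) ys)"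
  by (induction xs arbitrary: D) (auto simp: del_seq_Cons del_seq_def[of _ "[]"])

lemma Nseq_append: "Nseq D (xs @ ys) (length xs + j) = Nseq (del_seq D xs) ys j"
  by (simp add: Nseq_def del_seq_append)

lemma cl_finite: "finite (cl n d D m)"
proof -
  have "cl n d D m \<subseteq> Pow {1..n}" unfolding cl_def by auto
  then show ?thesis by (rule finite_subset) simp
qed

lemma step:
  assumes D: "D \<subseteq> Cnd n d" and s: "simplicial d D g" and m: "d \<le> m" and d1: "1 \<le> d"
  shows "card (cl n d D m) = card (cl n d (del D g) m) + (card (nbhd D g) choose (m - (d-1)))"
proof -
  define A where "A = nbhd D g"
  from s have cg: "card g = d - 1" and ex: "\<exists>F\<in>D. g \<subseteq> F" and K: "is_clique d D (g \<union> A)"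
    unfolding simplicial_def submax_circuit_def A_def cnbhd_def by auto
  from ex D have gn: "g \<subseteq> {1..n}" unfolding Cnd_def by auto
  then have fg: "finite g" using finite_subset by blast
  have An: "A \<subseteq> {1..n}" using nbhd_sub[OF D] A_def by simp
  have fA: "finite A" using An finite_subset by blast
  have disj: "g \<inter> A = {}"
  proof (rule ccontr)
    assume "g \<inter> A \<noteq> {}"
    then obtain c where c: "c \<in> g" "c \<in> A" by auto
    then have "g \<union> {c} = g" by auto
    moreover have "g \<union> {c} \<in> D" using c A_def nbhd_def by auto
    ultimately have "card g = d" using D Cnd_def by auto
    with cg d1 show False by simp
  qed
  have card_ins: "card (g \<union> {c}) = d" if "c \<notin> g" for c
    using that fg cg d1 by simp
  define X where "X = {S \<in> cl n d D m. g \<subseteq> S}"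
  have del_eq: "cl n d (del D g) m = {S \<in> cl n d D m. \<not> g \<subseteq> S}"
  proof (intro set_eqI iffI)
    fix S assume S: "S \<in> cl n d (del D g) m"
    then have Sn: "S \<subseteq> {1..n}" and cS: "card S = m" and cq: "is_clique d (del D g) S"
      unfolding cl_def by auto
    have "is_clique d D S" using cq unfolding is_clique_def del_def by auto
    moreover have "\<not> g \<subseteq> S"
    proof
      assume gS: "g \<subseteq> S"
      have fS: "finite S" using Sn finite_subset by blast
      have "card g < card S" using cg cS m d1 by simp
      then have "\<not> S \<subseteq> g" using card_mono[OF fg] by (metis not_le)
      then obtain c where c: "c \<in> S" "c \<notin> g" by auto
      then have "g \<union> {c} \<subseteq> S" using gS by auto
      then have "g \<union> {c} \<in> del D g" using cq card_ins[OF c(2)] unfolding is_clique_def by auto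
      then show False unfolding del_def by auto
    qed
    ultimately show "S \<in> {S \<in> cl n d D m. \<not> g \<subseteq> S}" using Sn cS unfolding cl_def by auto
  next
    fix S assume "S \<in> {S \<in> cl n d D m. \<not> g \<subseteq> S}"
    then show "S \<in> cl n d (del D g) m" unfolding cl_def is_clique_def del_def by auto
  qed
  have X_eq: "X = (\<lambda>B. g \<union> B) ` {B. B \<subseteq> A \<and> card B = m - (d-1)}"
  proof (intro set_eqI iffI)
    fix S assume "S \<in> X"
    then have Sn: "S \<subseteq> {1..n}" and cS: "card S = m" and cq: "is_clique d D S" and gS: "g \<subseteq> S"
      unfolding X_def cl_def by auto
    have fS: "finite S" using Sn finite_subset by blast
    have "S - g \<subseteq> A"
    proof
      fix c assume c: "c \<in> S - g"
      then have "g \<union> {c} \<subseteq> S" using gS by auto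
      then have "g \<union> {c} \<in> D" using cq card_ins c unfolding is_clique_def by auto
      then show "c \<in> A" unfolding A_def nbhd_def by auto
    qed
    moreover have "card (S - g) = m - (d-1)" using card_Diff_subset[OF fg gS] cS cg by simp
    moreover have "S = g \<union> (S - g)" using gS by auto
    ultimately show "S \<in> (\<lambda>B. g \<union> B) ` {B. B \<subseteq> A \<and> card B = m - (d-1)}" by blast
  next
    fix S assume "S \<in> (\<lambda>B. g \<union> B) ` {B. B \<subseteq> A \<and> card B = m - (d-1)}"
    then obtain B where B: "B \<subseteq> A" "card B = m - (d-1)" and SB: "S = g \<union> B" by auto
    have fB: "finite B" using B fA finite_subset by blast
    have "B \<inter> g = {}" using B disj by auto
    then have "card S = (d - 1) + (m - (d-1))" using SB card_Un_disjoint[OF fg fB] cg B by auto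
    then have "card S = m" using m d1 by simp
    moreover have "S \<subseteq> {1..n}" using SB gn An B by auto
    moreover have "is_clique d D S" using K SB B unfolding is_clique_def by auto
    ultimately show "S \<in> X" unfolding X_def cl_def using SB by auto
  qed
  have inj: "inj_on (\<lambda>B. g \<union> B) {B. B \<subseteq> A \<and> card B = m - (d-1)}"
  proof (rule inj_onI)
    fix B B' assume "B \<in> {B. B \<subseteq> A \<and> card B = m - (d-1)}" "B' \<in> {B. B \<subseteq> A \<and> card B = m - (d-1)}"
      "g \<union> B = g \<union> B'"
    then show "B = B'" using disj by blast
  qed
  have cX: "card X = card A choose (m - (d-1))"
    using X_eq card_image[OF inj] n_subsets[OF fA] by simp
  have "cl n d D m = cl n d (del D g) m \<union> X" unfolding del_eq X_def by auto
  moreover have "cl n d (del D g) m \<inter> X = {}" unfolding del_eq X_def by auto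
  moreover have "finite X" unfolding X_def using cl_finite by simp
  ultimately have "card (cl n d D m) = card (cl n d (del D g) m) + card X"
    using card_Un_disjoint cl_finite by metis
  then show ?thesis using cX A_def by simp
qed

lemma iter:
  assumes "D \<subseteq> Cnd n d" "simp_seq d D gs" "d \<le> m" "1 \<le> d"
  shows "card (cl n d D m) = card (cl n d (del_seq D gs) m) + (\<Sum>j<length gs. Nseq D gs j choose (m-(d-1)))"
  using assms(1,2)
proof (induction gs arbitrary: D)
  case Nil then show ?case by (simp add: del_seq_def)
next
  case (Cons g gs)
  have s: "simplicial d D g" and ss: "simp_seq d (del D g) gs" using Cons.prems by auto
  have Dd: "del D g \<subseteq> Cnd n d" using Cons.prems(1) unfolding del_def by auto
  have N0: "Nseq D (g # gs) 0 = card (nbhd D g)" by (simp add: Nseq_def del_seq_def)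
  have NS: "Nseq D (g # gs) (Suc j) = Nseq (del D g) gs j" for j
    by (simp add: Nseq_def del_seq_Cons)
  have sh: "(\<Sum>j<length (g#gs). Nseq D (g # gs) j choose (m-(d-1)))
     = (card (nbhd D g) choose (m-(d-1))) + (\<Sum>j<length gs. Nseq (del D g) gs j choose (m-(d-1)))"
    by (simp only: length_Cons sum.lessThan_Suc_shift N0 NS)
  show ?case
    using step[OF Cons.prems(1) s assms(3,4)] Cons.IH[OF Dd ss] unfolding sh
    by (simp add: del_seq_Cons)
qed

lemma cl_empty: "d \<le> m \<Longrightarrow> cl n d {} m = {}"
proof (rule ccontr)
  assume "d \<le> m" "cl n d {} m \<noteq> {}"
  then obtain S where "S \<subseteq> {1..n}" "card S = m" "is_clique d {} S" unfolding cl_def by auto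
  moreover then obtain T where "T \<subseteq> S" "card T = d" using obtain_subset_with_card_n \<open>d \<le> m\<close> by metis
  ultimately show False unfolding is_clique_def by auto
qed

lemma cl_Cnd: "card (cl n d (Cnd n d) m) = n choose m"
proof -
  have "cl n d (Cnd n d) m = {S. S \<subseteq> {1..n} \<and> card S = m}"
    unfolding cl_def is_clique_def Cnd_def by auto
  then show ?thesis using n_subsets[of "{1..n}" m] by simp
qed


theorem corollary4p8:
  fixes n d :: nat and C :: "nat set set"
  assumes "2 \<le> d" and "d \<le> n"
    and "C \<subseteq> Cnd n d"
    and "chordal d C" and "cochordal n d C"
  shows "\<forall>es. simp_order d C es \<longrightarrow>
           (\<forall>i\<ge>1. lambda_cl C es i \<le> binom0 (int n - 1 - int i) (d - 2))"
proof (intro allI impI)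
  fix fs and i :: nat assume so: "simp_order d C fs" and i1: "1 \<le> i"
  obtain es where es: "simp_seq d (Cnd n d) es" and Ceq: "C = del_seq (Cnd n d) es"
    using assms(5) unfolding cochordal_def by auto
  define gs where "gs = es @ fs"
  have sgs: "simp_seq d (Cnd n d) gs" and dgs: "del_seq (Cnd n d) gs = {}"
    using so es Ceq unfolding gs_def simp_order_def by (auto simp: simp_seq_append del_seq_append)
  define L where "L = length gs"
  define N where "N j = Nseq (Cnd n d) gs j" for j
  have Nle: "N j \<le> n" for j
  proof -
    have "del_seq (Cnd n d) (take j gs) \<subseteq> Cnd n d" by (rule del_seq_sub)
    then have "nbhd (del_seq (Cnd n d) (take j gs)) (gs ! j) \<subseteq> {1..n}" by (rule nbhd_sub)
    then show ?thesis unfolding N_def Nseq_def using card_mono[of "{1..n}"] by fastforce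
  qed
  define mu where "mu i = card {j. j < L \<and> N j = i}" for i
  define nu where "nu i = binom0 (int n - 1 - int i) (d - 2)" for i
  have mu0: "mu i = 0" if "n < i" for i
    using Nle that unfolding mu_def by (metis (mono_tags, lifting) Collect_empty_eq card.empty not_le)
  have nu0: "nu i = 0" if "n < i" for i using that unfolding nu_def binom0_def by simp
  have mom: "(\<Sum>i\<le>n. mu i * (i choose k)) = (\<Sum>i\<le>n. nu i * (i choose k))" if k1: "1 \<le> k" for k
  proof -
    have "(\<Sum>i\<le>n. mu i * (i choose k)) = (\<Sum>i\<le>n. \<Sum>j\<in>{x \<in> {..<L}. N x = i}. N j choose k)"
      unfolding mu_def by (intro sum.cong) auto
    also have "\<dots> = (\<Sum>j<L. N j choose k)"
      by (rule sum.group) (use Nle in auto)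
    also have "\<dots> = n choose (k + d - 1)"
      using iter[where D="Cnd n d" and n=n and d=d and gs=gs and m="k + d - 1"] sgs dgs cl_empty[of d "k + d - 1" n] cl_Cnd[of n d "k + d - 1"]
        k1 assms(1) unfolding L_def N_def by simp
    also have "\<dots> = (\<Sum>i<n. (i choose k) * ((n - 1 - i) choose (d - 2)))"
      using upper_vandermonde[where n=n and a=k and b="d - 2"] assms(1)
      by (simp add: Suc_diff_le[symmetric])
    also have "\<dots> = (\<Sum>i<n. nu i * (i choose k))"
      by (intro sum.cong) (auto simp: nu_def binom0_def nat_diff_distrib)
    also have "\<dots> = (\<Sum>i\<le>n. nu i * (i choose k))"
      using nu0 by (simp add: lessThan_Suc_atMost[symmetric] nu_def binom0_def)
    finally show ?thesis .
  qed
  have eq: "mu i = nu i" using moments_unique[OF mu0 nu0 mom i1] by blast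
  have "lambda_cl C fs i \<le> mu i"
    unfolding lambda_cl_def mu_def
  proof (rule card_inj_on_le[where f = "\<lambda>j. length es + j"])
    show "inj_on (\<lambda>j. length es + j) {j. j < length fs \<and> Nseq C fs j = i}" by (simp add: inj_on_def)
    show "(\<lambda>j. length es + j) ` {j. j < length fs \<and> Nseq C fs j = i} \<subseteq> {j. j < L \<and> N j = i}"
      unfolding L_def N_def gs_def using Nseq_append[of "Cnd n d" es fs] Ceq by auto
    show "finite {j. j < L \<and> N j = i}" by simp
  qed
  then show "lambda_cl C fs i \<le> binom0 (int n - 1 - int i) (d - 2)" using eq nu_def by simp
qed

end
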